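(* Let $L$ be a finite relational language and $\mathbb X,\mathbb Y$ be $L$-structures. (I) The following are equivalent: (a) $\mathbb X\preccurlyeq_c^{\mathrm{fin}}\mathbb Y$, i.e. there is a sequence $\langle\Pi_r:r<\omega\rangle$ of nonempty subsets of $\mathrm{PC}(\mathbb X,\mathbb Y)$ such that for every $r<\omega$: (f1) for all $f\in\Pi_{r+1}$ and $x\in X$ there is $g\in\Pi_r$ with $x\in\operatorname{dom}g$ and $f\subseteq g$, and (f2) for all $f\in\Pi_{r+1}$ and $y\in Y$ there is $g\in\Pi_r$ with $y\in\operatorname{ran}g$ and $f\subseteq g$; (b) for each $n\in\omega$, player II has a winning strategy in the game $G^{\preccurlyeq_c}_n(\mathbb X,\mathbb Y)$; (c) $\mathbb X\lll_{\mathcal P}\mathbb Y$; (d) $\mathbb Y\lll_{\mathcal N}\mathbb X$. (II) The following are equivalent: (a) $\mathbb X\preccurlyeq_c^{\mathrm{fin}}\mathbb Y$ and $\mathbb Y\preccurlyeq_c^{\mathrm{fin}}\mathbb X$; (b) for each $n\in\omega$, player II has winning strategies in both $G^{\preccurlyeq_c}_n(\mathbb X,\mathbb Y)$ and $G^{\preccurlyeq_c}_n(\mathbb Y,\mathbb X)$; (c) $\mathbb X\equiv_{\mathcal P}\mathbb Y$; (d) $\mathbb X\equiv_{\mathcal N}\mathbb Y$; (e) $\mathbb X\equiv_{\mathcal P\cup\mathcal N}\mathbb Y$; (f) $\mathbb X\lll_{\mathcal P\cup\mathcal N}\mathbb Y$.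
   Context: $L=\langle R_i:i\in I\rangle$ is a relational language, $R_i$ of arity $n_i$; for an $L$-structure $\mathbb X$ with domain $X$, $R_i^{\mathbb X}$ is the interpretation of $R_i$. For a map $f$ and tuple $\bar x=\langle x_0,\dots,x_{k-1}\rangle$ write $f\bar x=\langle f(x_0),\dots,f(x_{k-1})\rangle$. A partial condensation from $\mathbb X$ to $\mathbb Y$ is a bijection $f$ from a set $\operatorname{dom}f\subseteq X$ onto a set $\operatorname{ran}f\subseteq Y$ such that for all $i\in I$ and $\bar x\in(\operatorname{dom}f)^{n_i}$, $\bar x\in R_i^{\mathbb X}$ implies $f\bar x\in R_i^{\mathbb Y}$; $\mathrm{PC}(\mathbb X,\mathbb Y)$ is the set of these. For $n\in\omega$, the game $G^{\preccurlyeq_c}_n(\mathbb X,\mathbb Y)$ has $n$ steps $k<n$; at step $k$ player I either chooses $x_k\in X$ and then player II chooses $y_k\in Y$, or player I chooses $y_k\in Y$ and then II chooses $x_k\in X$. Player II wins iff $\{\langle x_k,y_k\rangle:k<n\}\in\mathrm{PC}(\mathbb X,\mathbb Y)$. A strategy for II determines its move from the previous moves and I's current choice; it is winning if II wins every play in which it is followed. Formula classes: $\mathcal P_0$ consists of all atomic formulas ($v_\alpha=v_\beta$, $R_i(v_{\alpha_1},\dots,v_{\alpha_{n_i}})$) and all $\neg\,v_\alpha=v_\beta$. $\mathcal N_0$ consists of all $\neg R_i(v_{\alpha_1},\dots,v_{\alpha_{n_i}})$, all $v_\alpha=v_\beta$ and all $\neg\,v_\alpha=v_\beta$. $\mathcal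 P$ (resp. $\mathcal N$), the $R$-positive (resp. $R$-negative) first order formulas, is the closure of $\mathcal P_0$ (resp. $\mathcal N_0$) under finite conjunctions, finite disjunctions, $\forall v$ and $\exists v$ (no negation). For a class $\mathcal F$ of formulas, $\mathbb X\lll_{\mathcal F}\mathbb Y$ means every sentence of $\mathcal F$ true in $\mathbb X$ is true in $\mathbb Y$, and $\mathbb X\equiv_{\mathcal F}\mathbb Y$ means they satisfy the same sentences of $\mathcal F$. *)

theory Defs
  imports Main
begin

text \<open>A relational language is given by a set I of relation symbols and an arity
function ar.\<close>

record ('a, 'i) lstr =
  univ :: "'a set"
  rels :: "'i \<Rightarrow> 'a list set"

definition is_struct :: "'i set \<Rightarrow> ('i \<Rightarrow> nat) \<Rightarrow> ('a, 'i) lstr \<Rightarrow> bool" where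
  "is_struct I ar M \<longleftrightarrow> univ M \<noteq> {} \<and>
     (\<forall>i\<in>I. rels M i \<subseteq> {xs. length xs = ar i \<and> set xs \<subseteq> univ M})"

text \<open>A partial map is represented by its graph, a set of pairs.\<close>

definition PC :: "'i set \<Rightarrow> ('a, 'i) lstr \<Rightarrow> ('b, 'i) lstr \<Rightarrow> ('a \<times> 'b) set set" where
  "PC I MX MY = {f.
     (\<forall>x y x' y'. (x, y) \<in> f \<longrightarrow> (x', y') \<in> f \<longrightarrow> (x = x' \<longleftrightarrow> y = y')) \<and>
     Domain f \<subseteq> univ MX \<and> Range f \<subseteq> univ MY \<and>
     (\<forall>i\<in>I. \<forall>xs ys. list_all2 (\<lambda>x y. (x, y) \<in> f) xs ys \<longrightarrow>
        xs \<in> rels MX i \<longrightarrow> ys \<in> rels MY i)}"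

definition cond_fin :: "'i set \<Rightarrow> ('a, 'i) lstr \<Rightarrow> ('b, 'i) lstr \<Rightarrow> bool" where
  "cond_fin I MX MY \<longleftrightarrow> (\<exists>\<Pi> :: nat \<Rightarrow> ('a \<times> 'b) set set.
     (\<forall>r. \<Pi> r \<noteq> {} \<and> \<Pi> r \<subseteq> PC I MX MY) \<and>
     (\<forall>r. \<forall>f\<in>\<Pi> (Suc r). \<forall>x\<in>univ MX. \<exists>g\<in>\<Pi> r. x \<in> Domain g \<and> f \<subseteq> g) \<and>
     (\<forall>r. \<forall>f\<in>\<Pi> (Suc r). \<forall>y\<in>univ MY. \<exists>g\<in>\<Pi> r. y \<in> Range g \<and> f \<subseteq> g))"

text \<open>A move of player I is Inl x (a choice x in X) or Inr y (a choice y in Y).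
A round of a play is recorded as ((x_k, y_k), b) where b is True iff I chose x_k.
A strategy for II maps the history of previous rounds and I's current choice to
II's answer, which must be an element of the other structure.\<close>

fun mk_round :: "'a + 'b \<Rightarrow> 'a + 'b \<Rightarrow> ('a \<times> 'b) \<times> bool" where
  "mk_round (Inl x) r = ((x, case r of Inr y \<Rightarrow> y | Inl _ \<Rightarrow> undefined), True)"
| "mk_round (Inr y) r = ((case r of Inl x \<Rightarrow> x | Inr _ \<Rightarrow> undefined, y), False)"

definition play ::
  "((('a \<times> 'b) \<times> bool) list \<Rightarrow> 'a + 'b \<Rightarrow> 'a + 'b) \<Rightarrow> ('a + 'b) list
     \<Rightarrow> (('a \<times> 'b) \<times> bool) list" where
  "play \<sigma> ms = foldl (\<lambda>h m. h @ [mk_round m (\<sigma> h m)]) [] ms"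

definition II_wins :: "'i set \<Rightarrow> nat \<Rightarrow> ('a, 'i) lstr \<Rightarrow> ('b, 'i) lstr \<Rightarrow> bool" where
  "II_wins I n MX MY \<longleftrightarrow> (\<exists>\<sigma>.
     (\<forall>h x. x \<in> univ MX \<longrightarrow> (\<exists>y\<in>univ MY. \<sigma> h (Inl x) = Inr y)) \<and>
     (\<forall>h y. y \<in> univ MY \<longrightarrow> (\<exists>x\<in>univ MX. \<sigma> h (Inr y) = Inl x)) \<and>
     (\<forall>ms. length ms = n \<longrightarrow> set ms \<subseteq> Inl ` univ MX \<union> Inr ` univ MY \<longrightarrow>
        set (map fst (play \<sigma> ms)) \<in> PC I MX MY))"

datatype 'i fm =
    Eq nat nat
  | Rel 'i "nat list"
  | Neg "'i fm"
  | Conj "'i fm" "'i fm"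
  | Disj "'i fm" "'i fm"
  | All nat "'i fm"
  | Ex nat "'i fm"

fun fv :: "'i fm \<Rightarrow> nat set" where
  "fv (Eq a b) = {a, b}"
| "fv (Rel i vs) = set vs"
| "fv (Neg \<phi>) = fv \<phi>"
| "fv (Conj \<phi> \<psi>) = fv \<phi> \<union> fv \<psi>"
| "fv (Disj \<phi> \<psi>) = fv \<phi> \<union> fv \<psi>"
| "fv (All v \<phi>) = fv \<phi> - {v}"
| "fv (Ex v \<phi>) = fv \<phi> - {v}"

fun sat :: "('a, 'i) lstr \<Rightarrow> (nat \<Rightarrow> 'a) \<Rightarrow> 'i fm \<Rightarrow> bool" where
  "sat M \<nu> (Eq a b) = (\<nu> a = \<nu> b)"
| "sat M \<nu> (Rel i vs) = (map \<nu> vs \<in> rels M i)"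
| "sat M \<nu> (Neg \<phi>) = (\<not> sat M \<nu> \<phi>)"
| "sat M \<nu> (Conj \<phi> \<psi>) = (sat M \<nu> \<phi> \<and> sat M \<nu> \<psi>)"
| "sat M \<nu> (Disj \<phi> \<psi>) = (sat M \<nu> \<phi> \<or> sat M \<nu> \<psi>)"
| "sat M \<nu> (All v \<phi>) = (\<forall>a\<in>univ M. sat M (\<nu>(v := a)) \<phi>)"
| "sat M \<nu> (Ex v \<phi>) = (\<exists>a\<in>univ M. sat M (\<nu>(v := a)) \<phi>)"

definition sentence :: "'i fm \<Rightarrow> bool" where
  "sentence \<phi> \<longleftrightarrow> fv \<phi> = {}"

definition models :: "('a, 'i) lstr \<Rightarrow> 'i fm \<Rightarrow> bool" where
  "models M \<phi> \<longleftrightarrow> (\<forall>\<nu>. (\<forall>v. \<nu> v \<in> univ M) \<longrightarrow> sat M \<nu> \<phi>)"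

inductive_set Pfm :: "'i set \<Rightarrow> ('i \<Rightarrow> nat) \<Rightarrow> 'i fm set" for I ar where
  P_eq: "Eq a b \<in> Pfm I ar"
| P_rel: "i \<in> I \<Longrightarrow> length vs = ar i \<Longrightarrow> Rel i vs \<in> Pfm I ar"
| P_neq: "Neg (Eq a b) \<in> Pfm I ar"
| P_conj: "\<phi> \<in> Pfm I ar \<Longrightarrow> \<psi> \<in> Pfm I ar \<Longrightarrow> Conj \<phi> \<psi> \<in> Pfm I ar"
| P_disj: "\<phi> \<in> Pfm I ar \<Longrightarrow> \<psi> \<in> Pfm I ar \<Longrightarrow> Disj \<phi> \<psi> \<in> Pfm I ar"
| P_all: "\<phi> \<in> Pfm I ar \<Longrightarrow> All v \<phi> \<in> Pfm I ar"
| P_ex: "\<phi> \<in> Pfm I ar \<Longrightarrow> Ex v \<phi> \<in> Pfm I ar"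

inductive_set Nfm :: "'i set \<Rightarrow> ('i \<Rightarrow> nat) \<Rightarrow> 'i fm set" for I ar where
  N_nrel: "i \<in> I \<Longrightarrow> length vs = ar i \<Longrightarrow> Neg (Rel i vs) \<in> Nfm I ar"
| N_eq: "Eq a b \<in> Nfm I ar"
| N_neq: "Neg (Eq a b) \<in> Nfm I ar"
| N_conj: "\<phi> \<in> Nfm I ar \<Longrightarrow> \<psi> \<in> Nfm I ar \<Longrightarrow> Conj \<phi> \<psi> \<in> Nfm I ar"
| N_disj: "\<phi> \<in> Nfm I ar \<Longrightarrow> \<psi> \<in> Nfm I ar \<Longrightarrow> Disj \<phi> \<psi> \<in> Nfm I ar"
| N_all: "\<phi> \<in> Nfm I ar \<Longrightarrow> All v \<phi> \<in> Nfm I ar"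
| N_ex: "\<phi> \<in> Nfm I ar \<Longrightarrow> Ex v \<phi> \<in> Nfm I ar"

definition lll :: "'i fm set \<Rightarrow> ('a, 'i) lstr \<Rightarrow> ('b, 'i) lstr \<Rightarrow> bool" where
  "lll F MX MY \<longleftrightarrow> (\<forall>\<phi>\<in>F. sentence \<phi> \<longrightarrow> models MX \<phi> \<longrightarrow> models MY \<phi>)"

definition equivF :: "'i fm set \<Rightarrow> ('a, 'i) lstr \<Rightarrow> ('b, 'i) lstr \<Rightarrow> bool" where
  "equivF F MX MY \<longleftrightarrow> (\<forall>\<phi>\<in>F. sentence \<phi> \<longrightarrow> (models MX \<phi> \<longleftrightarrow> models MY \<phi>))"

end

theory Submission
  imports Defs
begin



lemma PC_mono:
  assumes "g \<in> PC I MX MY" "f \<subseteq> g" shows "f \<in> PC I MX MY"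
proof -
  have l: "list_all2 (\<lambda>x y. (x, y) \<in> g) xs ys" if "list_all2 (\<lambda>x y. (x, y) \<in> f) xs ys" for xs ys
    using that by (rule list_all2_mono) (use assms(2) in blast)
  from assms(1) have a: "\<forall>x y x' y'. (x, y) \<in> g \<longrightarrow> (x', y') \<in> g \<longrightarrow> (x = x') = (y = y')"
    "Domain g \<subseteq> univ MX" "Range g \<subseteq> univ MY"
    "\<forall>i\<in>I. \<forall>xs ys. list_all2 (\<lambda>x y. (x, y) \<in> g) xs ys \<longrightarrow> xs \<in> rels MX i \<longrightarrow> ys \<in> rels MY i"
    unfolding PC_def by auto
  have "\<forall>x y x' y'. (x, y) \<in> f \<longrightarrow> (x', y') \<in> f \<longrightarrow> (x = x') = (y = y')"
    using a(1) assms(2) by blast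
  moreover have "Domain f \<subseteq> univ MX" "Range f \<subseteq> univ MY" using a(2,3) assms(2) by blast+
  moreover have "\<forall>i\<in>I. \<forall>xs ys. list_all2 (\<lambda>x y. (x, y) \<in> f) xs ys \<longrightarrow> xs \<in> rels MX i \<longrightarrow> ys \<in> rels MY i"
    using a(4) l by blast
  ultimately show ?thesis unfolding PC_def by blast
qed

lemma foldl_app_prefix: "\<exists>t. foldl (\<lambda>h m. h @ [F h m]) h0 xs = h0 @ t"
proof (induction xs arbitrary: h0)
  case Nil then show ?case by simp
next
  case (Cons a xs)
  then obtain t where "foldl (\<lambda>h m. h @ [F h m]) (h0 @ [F h0 a]) xs = (h0 @ [F h0 a]) @ t" by blast
  then show ?case by simp
qed

lemma play_snoc: "play \<sigma> (ms @ [m]) = play \<sigma> ms @ [mk_round m (\<sigma> (play \<sigma> ms) m)]"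
  by (simp add: play_def)

lemma play_Nil: "play \<sigma> [] = []" by (simp add: play_def)

lemma play_append: "\<exists>t. play \<sigma> (ms @ ms') = play \<sigma> ms @ t"
  unfolding play_def foldl_append by (rule foldl_app_prefix)

lemma length_play: "length (play \<sigma> ms) = length ms"
  by (induction ms rule: rev_induct) (auto simp: play_snoc play_Nil)

fun qr :: "'i fm \<Rightarrow> nat" where
  "qr (Eq a b) = 0" | "qr (Rel i vs) = 0" | "qr (Neg \<phi>) = qr \<phi>"
| "qr (Conj \<phi> \<psi>) = max (qr \<phi>) (qr \<psi>)" | "qr (Disj \<phi> \<psi>) = max (qr \<phi>) (qr \<psi>)"
| "qr (All v \<phi>) = Suc (qr \<phi>)" | "qr (Ex v \<phi>) = Suc (qr \<phi>)"

lemma game_transfer: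
  assumes st: "is_struct I ar MX"
   and s1: "\<forall>h x. x \<in> univ MX \<longrightarrow> (\<exists>y\<in>univ MY. \<sigma> h (Inl x) = Inr y)"
   and s2: "\<forall>h y. y \<in> univ MY \<longrightarrow> (\<exists>x\<in>univ MX. \<sigma> h (Inr y) = Inl x)"
   and s3: "\<forall>ms. length ms = n \<longrightarrow> set ms \<subseteq> Inl ` univ MX \<union> Inr ` univ MY \<longrightarrow> set (map fst (play \<sigma> ms)) \<in> PC I MX MY"
  shows "\<phi> \<in> Pfm I ar \<Longrightarrow> set ms \<subseteq> Inl ` univ MX \<union> Inr ` univ MY \<Longrightarrow> length ms + qr \<phi> \<le> n
     \<Longrightarrow> (\<forall>v\<in>fv \<phi>. (\<nu> v, \<nu>' v) \<in> set (map fst (play \<sigma> ms))) \<Longrightarrow> sat MX \<nu> \<phi> \<Longrightarrow> sat MY \<nu>' \<phi>"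
proof (induction \<phi> arbitrary: ms \<nu> \<nu>' rule: Pfm.induct)
  have cur: "set (map fst (play \<sigma> ms)) \<in> PC I MX MY"
    if "set ms \<subseteq> Inl ` univ MX \<union> Inr ` univ MY" "length ms \<le> n" for ms
  proof -
    obtain x0 where x0: "x0 \<in> univ MX" using st unfolding is_struct_def by blast
    let ?ms = "ms @ replicate (n - length ms) (Inl x0)"
    have "length ?ms = n" using that by simp
    moreover have "set ?ms \<subseteq> Inl ` univ MX \<union> Inr ` univ MY" using that x0 by auto
    ultimately have "set (map fst (play \<sigma> ?ms)) \<in> PC I MX MY"
      using s3 by blast
    moreover obtain t where "play \<sigma> ?ms = play \<sigma> ms @ t" using play_append by blast
    ultimately show ?thesis by (auto intro: PC_mono)
  qed
  {
    case (P_eq a b)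
    then have F: "set (map fst (play \<sigma> ms)) \<in> PC I MX MY" using cur by simp
    let ?F = "set (map fst (play \<sigma> ms))"
    have fi: "\<forall>x y x' y'. (x, y) \<in> ?F \<longrightarrow> (x', y') \<in> ?F \<longrightarrow> (x = x') = (y = y')"
      using F unfolding PC_def by blast
    have "(\<nu> a, \<nu>' a) \<in> ?F" "(\<nu> b, \<nu>' b) \<in> ?F" using P_eq.prems(3) by auto
    then show ?case using fi P_eq.prems(4) by (metis sat.simps(1))
  next
    case (P_neq a b)
    then have F: "set (map fst (play \<sigma> ms)) \<in> PC I MX MY" using cur by simp
    let ?F = "set (map fst (play \<sigma> ms))"
    have fi: "\<forall>x y x' y'. (x, y) \<in> ?F \<longrightarrow> (x', y') \<in> ?F \<longrightarrow> (x = x') = (y = y')"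
      using F unfolding PC_def by blast
    have "(\<nu> a, \<nu>' a) \<in> ?F" "(\<nu> b, \<nu>' b) \<in> ?F" using P_neq.prems(3) by auto
    then show ?case using fi P_neq.prems(4) by (metis sat.simps(1,3))
  next
    case (P_rel i vs)
    then have F: "set (map fst (play \<sigma> ms)) \<in> PC I MX MY" using cur by simp
    have "list_all2 (\<lambda>x y. (x, y) \<in> set (map fst (play \<sigma> ms))) (map \<nu> vs) (map \<nu>' vs)"
      using P_rel.prems(3) by (auto simp: list_all2_conv_all_nth)
    then show ?case using F P_rel unfolding PC_def by auto
  next
    case (P_conj \<phi> \<psi>)
    have "sat MY \<nu>' \<phi>" by (rule P_conj.IH(1)) (use P_conj.prems in auto)
    moreover have "sat MY \<nu>' \<psi>" by (rule P_conj.IH(2)) (use P_conj.prems in auto)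
    ultimately show ?case by simp
  next
    case (P_disj \<phi> \<psi>)
    show ?case
    proof (cases "sat MX \<nu> \<phi>")
      case True
      have "sat MY \<nu>' \<phi>" by (rule P_disj.IH(1)) (use P_disj.prems True in auto)
      then show ?thesis by simp
    next
      case False
      then have "sat MX \<nu> \<psi>" using P_disj.prems by simp
      then have "sat MY \<nu>' \<psi>" by (intro P_disj.IH(2)) (use P_disj.prems in auto)
      then show ?thesis by simp
    qed
  next
    case (P_all \<phi> v)
    show ?case unfolding sat.simps
    proof
      fix b assume b: "b \<in> univ MY"
      obtain a where a: "a \<in> univ MX" "\<sigma> (play \<sigma> ms) (Inr b) = Inl a" using s2 b by blast
      have pl: "play \<sigma> (ms @ [Inr b]) = play \<sigma> ms @ [((a, b), False)]"
        using a by (simp add: play_snoc)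
      show "sat MY (\<nu>'(v := b)) \<phi>"
      proof (rule P_all.IH[of "ms @ [Inr b]" "\<nu>(v := a)"])
        show "set (ms @ [Inr b]) \<subseteq> Inl ` univ MX \<union> Inr ` univ MY" using P_all.prems b by auto
        show "length (ms @ [Inr b]) + qr \<phi> \<le> n" using P_all.prems by simp
        show "\<forall>w\<in>fv \<phi>. ((\<nu>(v := a)) w, (\<nu>'(v := b)) w) \<in> set (map fst (play \<sigma> (ms @ [Inr b])))"
          using P_all.prems(3) unfolding pl by auto
        show "sat MX (\<nu>(v := a)) \<phi>" using P_all.prems(4) a by auto
      qed
    qed
  next
    case (P_ex \<phi> v)
    from P_ex.prems(4) obtain a where a: "a \<in> univ MX" "sat MX (\<nu>(v := a)) \<phi>" by auto
    obtain b where b: "b \<in> univ MY" "\<sigma> (play \<sigma> ms) (Inl a) = Inr b" using s1 a by blast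
    have pl: "play \<sigma> (ms @ [Inl a]) = play \<sigma> ms @ [((a, b), True)]"
      using b by (simp add: play_snoc)
    have "sat MY (\<nu>'(v := b)) \<phi>"
    proof (rule P_ex.IH[of "ms @ [Inl a]" "\<nu>(v := a)"])
      show "set (ms @ [Inl a]) \<subseteq> Inl ` univ MX \<union> Inr ` univ MY" using P_ex.prems a by auto
      show "length (ms @ [Inl a]) + qr \<phi> \<le> n" using P_ex.prems by simp
      show "\<forall>w\<in>fv \<phi>. ((\<nu>(v := a)) w, (\<nu>'(v := b)) w) \<in> set (map fst (play \<sigma> (ms @ [Inl a])))"
        using P_ex.prems(3) unfolding pl by auto
      show "sat MX (\<nu>(v := a)) \<phi>" using a by auto
    qed
    then show ?case using b by auto
  }
qed



definition chL :: "(nat \<Rightarrow> ('a \<times> 'b) set set) \<Rightarrow> ('a \<times> 'b) set \<Rightarrow> nat \<Rightarrow> 'a \<Rightarrow> ('a \<times> 'b) set" where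
  "chL \<Pi> f k x = (SOME g. g \<in> \<Pi> k \<and> f \<subseteq> g \<and> x \<in> Domain g)"
definition chR :: "(nat \<Rightarrow> ('a \<times> 'b) set set) \<Rightarrow> ('a \<times> 'b) set \<Rightarrow> nat \<Rightarrow> 'b \<Rightarrow> ('a \<times> 'b) set" where
  "chR \<Pi> f k y = (SOME g. g \<in> \<Pi> k \<and> f \<subseteq> g \<and> y \<in> Range g)"

fun Gaux :: "(nat \<Rightarrow> ('a \<times> 'b) set set) \<Rightarrow> nat \<Rightarrow> ('a \<times> 'b) set \<Rightarrow> (('a \<times> 'b) \<times> bool) list \<Rightarrow> ('a \<times> 'b) set" where
  "Gaux \<Pi> k f [] = f"
| "Gaux \<Pi> k f (((x, y), b) # rest) = Gaux \<Pi> (k - 1) (if b then chL \<Pi> f (k - 1) x else chR \<Pi> f (k - 1) y) rest"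

lemma Gaux_snoc: "Gaux \<Pi> k f (h @ [((x, y), b)]) =
  (if b then chL \<Pi> (Gaux \<Pi> k f h) (k - length h - 1) x else chR \<Pi> (Gaux \<Pi> k f h) (k - length h - 1) y)"
proof (induction h arbitrary: k f)
  case Nil then show ?case by simp
next
  case (Cons r h)
  obtain x' y' b' where r: "r = ((x', y'), b')" by (metis prod.exhaust)
  show ?case using Cons[of "k - 1"] unfolding r by (simp add: diff_diff_add)
qed

definition strat where
  "strat MX MY \<Pi> n f0 h m = (let k = n - length h - 1; G = Gaux \<Pi> n f0 h in
    case m of Inl x \<Rightarrow> Inr (SOME y. y \<in> univ MY \<and> ((x, y) \<in> chL \<Pi> G k x \<or> (\<forall>y'\<in>univ MY. (x, y') \<notin> chL \<Pi> G k x)))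
     | Inr y \<Rightarrow> Inl (SOME x. x \<in> univ MX \<and> ((x, y) \<in> chR \<Pi> G k y \<or> (\<forall>x'\<in>univ MX. (x', y) \<notin> chR \<Pi> G k y))))"

lemma cond_games:
  fixes MX :: "('a, 'i) lstr" and MY :: "('b, 'i) lstr"
  assumes sx: "is_struct I ar MX" and sy: "is_struct I ar MY" and c: "cond_fin I MX MY"
  shows "II_wins I n MX MY"
proof -
  obtain \<Pi> :: "nat \<Rightarrow> ('a \<times> 'b) set set" where
    P1: "\<forall>r. \<Pi> r \<noteq> {} \<and> \<Pi> r \<subseteq> PC I MX MY" and
    P2: "\<forall>r. \<forall>f\<in>\<Pi> (Suc r). \<forall>x\<in>univ MX. \<exists>g\<in>\<Pi> r. x \<in> Domain g \<and> f \<subseteq> g" and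
    P3: "\<forall>r. \<forall>f\<in>\<Pi> (Suc r). \<forall>y\<in>univ MY. \<exists>g\<in>\<Pi> r. y \<in> Range g \<and> f \<subseteq> g"
    using c unfolding cond_fin_def apply (elim exE conjE) apply (rule that) apply assumption+ done
  define f0 where "f0 = (SOME f. f \<in> \<Pi> n)"
  have f0: "f0 \<in> \<Pi> n" unfolding f0_def using P1 by (simp add: some_in_eq)
  define \<sigma> where "\<sigma> = strat MX MY \<Pi> n f0"
  have ney: "univ MY \<noteq> {}" using sy unfolding is_struct_def by blast
  have nex: "univ MX \<noteq> {}" using sx unfolding is_struct_def by blast
  have s1: "\<forall>h x. x \<in> univ MX \<longrightarrow> (\<exists>y\<in>univ MY. \<sigma> h (Inl x) = Inr y)"
  proof (intro allI impI)
    fix h x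
    let ?g = "chL \<Pi> (Gaux \<Pi> n f0 h) (n - length h - 1) x"
    let ?P = "\<lambda>y. y \<in> univ MY \<and> ((x, y) \<in> ?g \<or> (\<forall>y'\<in>univ MY. (x, y') \<notin> ?g))"
    have "\<exists>y. ?P y" using ney by blast
    then have "?P (SOME y. ?P y)" by (rule someI_ex)
    moreover have "\<sigma> h (Inl x) = Inr (SOME y. ?P y)" unfolding \<sigma>_def strat_def Let_def by simp
    ultimately show "\<exists>y\<in>univ MY. \<sigma> h (Inl x) = Inr y" by blast
  qed
  have s2: "\<forall>h y. y \<in> univ MY \<longrightarrow> (\<exists>x\<in>univ MX. \<sigma> h (Inr y) = Inl x)"
  proof (intro allI impI)
    fix h y
    let ?g = "chR \<Pi> (Gaux \<Pi> n f0 h) (n - length h - 1) y"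
    let ?P = "\<lambda>x. x \<in> univ MX \<and> ((x, y) \<in> ?g \<or> (\<forall>x'\<in>univ MX. (x', y) \<notin> ?g))"
    have "\<exists>x. ?P x" using nex by blast
    then have "?P (SOME x. ?P x)" by (rule someI_ex)
    moreover have "\<sigma> h (Inr y) = Inl (SOME x. ?P x)" unfolding \<sigma>_def strat_def Let_def by simp
    ultimately show "\<exists>x\<in>univ MX. \<sigma> h (Inr y) = Inl x" by blast
  qed
  have inv: "Gaux \<Pi> n f0 (play \<sigma> ms) \<in> \<Pi> (n - length ms) \<and> set (map fst (play \<sigma> ms)) \<subseteq> Gaux \<Pi> n f0 (play \<sigma> ms)"
    if "set ms \<subseteq> Inl ` univ MX \<union> Inr ` univ MY" "length ms \<le> n" for ms
    using that
  proof (induction ms rule: rev_induct)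
    case Nil then show ?case using f0 by (simp add: play_Nil)
  next
    case (snoc m ms)
    let ?h = "play \<sigma> ms"
    let ?f = "Gaux \<Pi> n f0 ?h"
    let ?k = "n - length ?h - 1"
    have IH: "?f \<in> \<Pi> (n - length ms)" "set (map fst ?h) \<subseteq> ?f" using snoc by auto
    have nk: "n - length ms = Suc ?k" using snoc.prems by (simp add: length_play)
    have fS: "?f \<in> \<Pi> (Suc ?k)" using IH nk by simp
    have lk: "n - length (ms @ [m]) = ?k" by (simp add: length_play)
    show ?case
    proof (cases m)
      case (Inl x)
      have x: "x \<in> univ MX" using snoc.prems Inl by auto
      let ?g = "chL \<Pi> ?f ?k x"
      have "\<exists>g. g \<in> \<Pi> ?k \<and> ?f \<subseteq> g \<and> x \<in> Domain g" using P2 fS x by blast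
      then have g: "?g \<in> \<Pi> ?k" "?f \<subseteq> ?g" "x \<in> Domain ?g" unfolding chL_def by (metis (no_types, lifting) someI_ex)+
      have gPC: "?g \<in> PC I MX MY" using g(1) P1 by blast
      obtain y0 where y0: "(x, y0) \<in> ?g" using g(3) by blast
      have y0Y: "y0 \<in> univ MY" using gPC y0 unfolding PC_def by blast
      define y where "y = (SOME y. y \<in> univ MY \<and> ((x, y) \<in> ?g \<or> (\<forall>y'\<in>univ MY. (x, y') \<notin> ?g)))"
      have "y \<in> univ MY \<and> ((x, y) \<in> ?g \<or> (\<forall>y'\<in>univ MY. (x, y') \<notin> ?g))"
        unfolding y_def by (rule someI_ex) (use y0 y0Y in blast)
      then have xy: "(x, y) \<in> ?g" using y0 y0Y by blast
      have sig: "\<sigma> ?h m = Inr y" unfolding \<sigma>_def strat_def Inl y_def Let_def by simp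
      have pl: "play \<sigma> (ms @ [m]) = ?h @ [((x, y), True)]" using sig Inl by (simp add: play_snoc)
      have G: "Gaux \<Pi> n f0 (play \<sigma> (ms @ [m])) = ?g" unfolding pl Gaux_snoc by simp
      show ?thesis unfolding G lk using g(1) g(2) IH(2) xy pl by auto
    next
      case (Inr y)
      have y: "y \<in> univ MY" using snoc.prems Inr by auto
      let ?g = "chR \<Pi> ?f ?k y"
      have "\<exists>g. g \<in> \<Pi> ?k \<and> ?f \<subseteq> g \<and> y \<in> Range g" using P3 fS y by blast
      then have g: "?g \<in> \<Pi> ?k" "?f \<subseteq> ?g" "y \<in> Range ?g" unfolding chR_def by (metis (no_types, lifting) someI_ex)+
      have gPC: "?g \<in> PC I MX MY" using g(1) P1 by blast
      obtain x0 where x0: "(x0, y) \<in> ?g" using g(3) by blast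
      have x0X: "x0 \<in> univ MX" using gPC x0 unfolding PC_def by blast
      define x where "x = (SOME x. x \<in> univ MX \<and> ((x, y) \<in> ?g \<or> (\<forall>x'\<in>univ MX. (x', y) \<notin> ?g)))"
      have "x \<in> univ MX \<and> ((x, y) \<in> ?g \<or> (\<forall>x'\<in>univ MX. (x', y) \<notin> ?g))"
        unfolding x_def by (rule someI_ex) (use x0 x0X in blast)
      then have xy: "(x, y) \<in> ?g" using x0 x0X by blast
      have sig: "\<sigma> ?h m = Inl x" unfolding \<sigma>_def strat_def Inr x_def Let_def by simp
      have pl: "play \<sigma> (ms @ [m]) = ?h @ [((x, y), False)]" using sig Inr by (simp add: play_snoc)
      have G: "Gaux \<Pi> n f0 (play \<sigma> (ms @ [m])) = ?g" unfolding pl Gaux_snoc by simp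
      show ?thesis unfolding G lk using g(1) g(2) IH(2) xy pl by auto
    qed
  qed
  have s3: "\<forall>ms. length ms = n \<longrightarrow> set ms \<subseteq> Inl ` univ MX \<union> Inr ` univ MY \<longrightarrow> set (map fst (play \<sigma> ms)) \<in> PC I MX MY"
  proof (intro allI impI)
    fix ms assume "length ms = n" "set ms \<subseteq> Inl ` univ MX \<union> Inr ` univ MY"
    with inv[of ms] have "Gaux \<Pi> n f0 (play \<sigma> ms) \<in> \<Pi> 0" "set (map fst (play \<sigma> ms)) \<subseteq> Gaux \<Pi> n f0 (play \<sigma> ms)" by auto
    then show "set (map fst (play \<sigma> ms)) \<in> PC I MX MY" using P1 by (meson PC_mono subsetD)
  qed
  show ?thesis unfolding II_wins_def using s1 s2 s3 by blast
qed



definition list_of :: "'x set \<Rightarrow> 'x list" where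
  "list_of S = (SOME xs. set xs \<subseteq> S \<and> (finite S \<longrightarrow> set xs = S))"

lemma list_of: "set (list_of S) \<subseteq> S \<and> (finite S \<longrightarrow> set (list_of S) = S)"
proof -
  have "\<exists>xs. set xs \<subseteq> S \<and> (finite S \<longrightarrow> set xs = S)"
  proof (cases "finite S")
    case True then show ?thesis using finite_list by blast
  next
    case False then show ?thesis by (intro exI[of _ "[]"]) simp
  qed
  then show ?thesis unfolding list_of_def by (rule someI_ex)
qed

lemma list_of_sub: "set (list_of S) \<subseteq> S"
  using list_of[of S] by (rule conjunct1)

lemma list_of_eq: "finite S \<Longrightarrow> set (list_of S) = S"
  using conjunct2[OF list_of[of S]] by (rule mp)

fun BigConj :: "'i fm list \<Rightarrow> 'i fm" where
  "BigConj [] = All 0 (Eq 0 0)"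
| "BigConj (\<phi> # \<psi>s) = Conj \<phi> (BigConj \<psi>s)"

fun BigDisj :: "'i fm list \<Rightarrow> 'i fm" where
  "BigDisj [] = Ex 0 (Neg (Eq 0 0))"
| "BigDisj (\<phi> # \<psi>s) = Disj \<phi> (BigDisj \<psi>s)"

lemma sat_BigConj: "sat M \<nu> (BigConj xs) \<longleftrightarrow> (\<forall>\<phi>\<in>set xs. sat M \<nu> \<phi>)"
  by (induction xs) auto
lemma sat_BigDisj: "sat M \<nu> (BigDisj xs) \<longleftrightarrow> (\<exists>\<phi>\<in>set xs. sat M \<nu> \<phi>)"
  by (induction xs) auto
lemma fv_BigConj: "fv (BigConj xs) = (\<Union>\<phi>\<in>set xs. fv \<phi>)"
  by (induction xs) auto
lemma fv_BigDisj: "fv (BigDisj xs) = (\<Union>\<phi>\<in>set xs. fv \<phi>)"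
  by (induction xs) auto
lemma Pfm_BigConj: "\<forall>\<phi>\<in>set xs. \<phi> \<in> Pfm I ar \<Longrightarrow> BigConj xs \<in> Pfm I ar"
  by (induction xs) (auto intro: Pfm.intros)
lemma Pfm_BigDisj: "\<forall>\<phi>\<in>set xs. \<phi> \<in> Pfm I ar \<Longrightarrow> BigDisj xs \<in> Pfm I ar"
  by (induction xs) (auto intro: Pfm.intros)

definition atomset :: "'i set \<Rightarrow> ('i \<Rightarrow> nat) \<Rightarrow> ('a, 'i) lstr \<Rightarrow> 'a list \<Rightarrow> 'i fm set" where
  "atomset I ar M as =
     {Rel i vs | i vs. i \<in> I \<and> length vs = ar i \<and> set vs \<subseteq> {..<length as} \<and> map (\<lambda>j. as ! j) vs \<in> rels M i}
   \<union> {Eq j l | j l. j < length as \<and> l < length as \<and> as ! j = as ! l}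
   \<union> {Neg (Eq j l) | j l. j < length as \<and> l < length as \<and> as ! j \<noteq> as ! l}"

definition Aset :: "'i set \<Rightarrow> ('i \<Rightarrow> nat) \<Rightarrow> nat \<Rightarrow> 'i fm set" where
  "Aset I ar k =
     {Rel i vs | i vs. i \<in> I \<and> length vs = ar i \<and> set vs \<subseteq> {..<k}}
   \<union> {Eq j l | j l. j < k \<and> l < k}
   \<union> {Neg (Eq j l) | j l. j < k \<and> l < k}"

lemma atomset_Aset: "atomset I ar M as \<subseteq> Aset I ar (length as)"
  unfolding atomset_def Aset_def by blast

lemma finite_Aset: assumes "finite I" shows "finite (Aset I ar k)"
proof -
  have e1: "{Rel i vs | i vs. i \<in> I \<and> length vs = ar i \<and> set vs \<subseteq> {..<k}}
      = (\<lambda>(i, vs). Rel i vs) ` (SIGMA i:I. {vs. set vs \<subseteq> {..<k} \<and> length vs = ar i})" by auto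
  have "finite (SIGMA i:I. {vs. set vs \<subseteq> {..<k} \<and> length vs = ar i})"
    using assms by (intro finite_SigmaI finite_lists_length_eq) auto
  then have f1: "finite {Rel i vs | i vs. i \<in> I \<and> length vs = ar i \<and> set vs \<subseteq> {..<k}}"
    unfolding e1 by (rule finite_imageI)
  have e2: "{Eq j l | j l. j < k \<and> l < k} = (\<lambda>(j, l). Eq j l) ` ({..<k} \<times> {..<k})" by auto
  have f2: "finite {Eq j l | j l. j < k \<and> l < k}" unfolding e2 by (intro finite_imageI) auto
  have e3: "{Neg (Eq j l) | j l. j < k \<and> l < k} = (\<lambda>(j, l). Neg (Eq j l)) ` ({..<k} \<times> {..<k})" by auto
  have f3: "finite {Neg (Eq j l) | j l. j < k \<and> l < k}" unfolding e3 by (intro finite_imageI) auto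
  show ?thesis unfolding Aset_def using f1 f2 f3 by blast
qed

lemma finite_atomset: "finite I \<Longrightarrow> finite (atomset I ar M as)"
  by (rule finite_subset[OF atomset_Aset finite_Aset])

definition atoms :: "'i set \<Rightarrow> ('i \<Rightarrow> nat) \<Rightarrow> ('a, 'i) lstr \<Rightarrow> 'a list \<Rightarrow> 'i fm" where
  "atoms I ar M as = BigConj (list_of (atomset I ar M as))"

definition HH :: "nat \<Rightarrow> 'i fm set \<Rightarrow> 'i fm set \<Rightarrow> 'i fm" where
  "HH k S U = Conj (BigConj (list_of S))
      (Conj (All k (BigDisj (list_of U))) (BigConj (map (Ex k) (list_of U))))"

primrec chi :: "'i set \<Rightarrow> ('i \<Rightarrow> nat) \<Rightarrow> ('a, 'i) lstr \<Rightarrow> nat \<Rightarrow> 'a list \<Rightarrow> 'i fm" where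
  "chi I ar M 0 = (\<lambda>as. atoms I ar M as)"
| "chi I ar M (Suc r) = (\<lambda>as. HH (length as) (atomset I ar M as) ((\<lambda>c. chi I ar M r (as @ [c])) ` univ M))"

lemma CH_sub: assumes "set as \<subseteq> univ M"
  shows "(\<lambda>c. chi I ar M r (as @ [c])) ` univ M \<subseteq> {chi I ar M r bs | bs. length bs = Suc (length as) \<and> set bs \<subseteq> univ M}"
proof
  fix \<phi> assume "\<phi> \<in> (\<lambda>c. chi I ar M r (as @ [c])) ` univ M"
  then obtain c where "c \<in> univ M" "\<phi> = chi I ar M r (as @ [c])" by blast
  then show "\<phi> \<in> {chi I ar M r bs | bs. length bs = Suc (length as) \<and> set bs \<subseteq> univ M}"
    using assms by (intro CollectI exI[of _ "as @ [c]"]) auto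
qed

lemma fin_chi: assumes "finite I"
  shows "finite {chi I ar M r as | as. length as = k \<and> set as \<subseteq> univ M}"
proof (induction r arbitrary: k)
  case 0
  have "{chi I ar M 0 as | as. length as = k \<and> set as \<subseteq> univ M} \<subseteq> (\<lambda>S. BigConj (list_of S)) ` Pow (Aset I ar k)"
  proof
    fix \<phi> assume "\<phi> \<in> {chi I ar M 0 as | as. length as = k \<and> set as \<subseteq> univ M}"
    then obtain as where as: "\<phi> = BigConj (list_of (atomset I ar M as))" "length as = k"
      unfolding atoms_def by (auto simp: atoms_def)
    then show "\<phi> \<in> (\<lambda>S. BigConj (list_of S)) ` Pow (Aset I ar k)" using atomset_Aset[of I ar M as] by blast
  qed
  then show ?case using finite_Aset[OF assms] by (meson finite_Pow_iff finite_imageI finite_subset)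
next
  case (Suc r)
  let ?T = "{chi I ar M r as | as. length as = Suc k \<and> set as \<subseteq> univ M}"
  have "{chi I ar M (Suc r) as | as. length as = k \<and> set as \<subseteq> univ M} \<subseteq> (\<lambda>(S, U). HH k S U) ` (Pow (Aset I ar k) \<times> Pow ?T)"
  proof
    fix \<phi> assume "\<phi> \<in> {chi I ar M (Suc r) as | as. length as = k \<and> set as \<subseteq> univ M}"
    then obtain as where as: "\<phi> = chi I ar M (Suc r) as" "length as = k" "set as \<subseteq> univ M" by blast
    have "(\<lambda>c. chi I ar M r (as @ [c])) ` univ M \<subseteq> ?T" using CH_sub[OF as(3)] as(2) by simp
    moreover have "atomset I ar M as \<subseteq> Aset I ar k" using atomset_Aset as by blast
    ultimately show "\<phi> \<in> (\<lambda>(S, U). HH k S U) ` (Pow (Aset I ar k) \<times> Pow ?T)" using as by force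
  qed
  moreover have "finite (Pow (Aset I ar k) \<times> Pow ?T)" using Suc finite_Aset[OF assms] by blast
  ultimately show ?case by (meson finite_imageI finite_subset)
qed

lemma fin_CH: assumes "finite I" "set as \<subseteq> univ M" shows "finite ((\<lambda>c. chi I ar M r (as @ [c])) ` univ M)"
  by (rule finite_subset[OF CH_sub[OF assms(2)] fin_chi[OF assms(1)]])

lemma atoms_Pfm: "atoms I ar M as \<in> Pfm I ar"
  unfolding atoms_def
  by (rule Pfm_BigConj) (use list_of_sub[of "atomset I ar M as"] in \<open>auto simp: atomset_def intro: Pfm.intros\<close>)

lemma chi_Pfm: "chi I ar M r as \<in> Pfm I ar"
proof (induction r arbitrary: as)
  case 0 then show ?case by (simp add: atoms_Pfm)
next
  case (Suc r)
  have A: "BigConj (list_of (atomset I ar M as)) \<in> Pfm I ar" using atoms_Pfm unfolding atoms_def .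
  let ?U = "(\<lambda>c. chi I ar M r (as @ [c])) ` univ M"
  have U: "\<forall>\<phi>\<in>set (list_of ?U). \<phi> \<in> Pfm I ar" using list_of_sub[of ?U] Suc by blast
  show ?case unfolding chi.simps HH_def
    using A U by (auto intro!: Pfm.intros Pfm_BigDisj Pfm_BigConj)
qed

lemma fv_atoms: "fv (atoms I ar M as) \<subseteq> {..<length as}"
proof -
  have "\<forall>\<phi>\<in>atomset I ar M as. fv \<phi> \<subseteq> {..<length as}" unfolding atomset_def by auto
  then show ?thesis unfolding atoms_def fv_BigConj using list_of_sub[of "atomset I ar M as"] by blast
qed

lemma fv_chi: "fv (chi I ar M r as) \<subseteq> {..<length as}"
proof (induction r arbitrary: as)
  case 0 then show ?case by (simp add: fv_atoms)
next
  case (Suc r)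
  let ?U = "(\<lambda>c. chi I ar M r (as @ [c])) ` univ M"
  have U0: "\<forall>\<phi>\<in>set (list_of ?U). fv \<phi> \<subseteq> {..<Suc (length as)}" using list_of_sub[of ?U] Suc by fastforce
  have U: "\<forall>\<phi>\<in>set (list_of ?U). fv \<phi> - {length as} \<subseteq> {..<length as}"
  proof
    fix \<phi> assume "\<phi> \<in> set (list_of ?U)"
    then have "fv \<phi> \<subseteq> {..<Suc (length as)}" using U0 by blast
    then show "fv \<phi> - {length as} \<subseteq> {..<length as}" by (auto simp: less_Suc_eq)
  qed
  show ?case unfolding chi.simps HH_def
    using fv_atoms[of I ar M as] U unfolding atoms_def
    by (auto simp: fv_BigConj fv_BigDisj less_Suc_eq)
qed

lemma sat_atoms_self:
  assumes "\<forall>j<length as. \<nu> j = as ! j"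
  shows "sat M \<nu> (atoms I ar M as)"
  unfolding atoms_def sat_BigConj
proof
  fix \<phi> assume "\<phi> \<in> set (list_of (atomset I ar M as))"
  then have "\<phi> \<in> atomset I ar M as" using list_of_sub[of "atomset I ar M as"] by blast
  then consider (R) i vs where "\<phi> = Rel i vs" "set vs \<subseteq> {..<length as}" "map ((!) as) vs \<in> rels M i"
    | (E) j l where "\<phi> = Eq j l" "j < length as" "l < length as" "as ! j = as ! l"
    | (N) j l where "\<phi> = Neg (Eq j l)" "j < length as" "l < length as" "as ! j \<noteq> as ! l"
    unfolding atomset_def by blast
  then show "sat M \<nu> \<phi>"
  proof cases
    case R
    have "\<forall>x\<in>set vs. \<nu> x = as ! x" using R(2) assms by auto
    then have mm: "map \<nu> vs = map ((!) as) vs" by simp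
    show ?thesis unfolding R(1) sat.simps mm by (rule R(3))
  next
    case E then show ?thesis using assms by simp
  next
    case N then show ?thesis using assms by simp
  qed
qed

lemma sat_chi_self:
  assumes "finite I" "set as \<subseteq> univ M" "\<forall>j<length as. \<nu> j = as ! j"
  shows "sat M \<nu> (chi I ar M r as)"
  using assms(2,3)
proof (induction r arbitrary: as \<nu>)
  case 0 then show ?case by (simp add: sat_atoms_self)
next
  case (Suc r)
  let ?k = "length as"
  let ?U = "(\<lambda>c. chi I ar M r (as @ [c])) ` univ M"
  have Ueq: "set (list_of ?U) = ?U" by (rule list_of_eq[OF fin_CH[OF assms(1) Suc.prems(1)]])
  have c1: "sat M (\<nu>(?k := c)) (chi I ar M r (as @ [c]))" if c: "c \<in> univ M" for c
  proof (rule Suc.IH)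
    show "set (as @ [c]) \<subseteq> univ M" using Suc.prems(1) c by simp
    show "\<forall>j<length (as @ [c]). (\<nu>(?k := c)) j = (as @ [c]) ! j"
      using Suc.prems(2) by (auto simp: nth_append less_Suc_eq)
  qed
  have at: "sat M \<nu> (BigConj (list_of (atomset I ar M as)))"
    using sat_atoms_self[OF Suc.prems(2), of M I ar] unfolding atoms_def .
  have A: "sat M \<nu> (All ?k (BigDisj (list_of ?U)))"
    unfolding sat.simps sat_BigDisj Ueq using c1 by blast
  have E: "sat M \<nu> (BigConj (map (Ex ?k) (list_of ?U)))"
    unfolding sat_BigConj
  proof
    fix \<psi> assume "\<psi> \<in> set (map (Ex ?k) (list_of ?U))"
    then obtain c where c: "c \<in> univ M" "\<psi> = Ex ?k (chi I ar M r (as @ [c]))" unfolding set_map Ueq by blast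
    then show "sat M \<nu> \<psi>" using c1[OF c(1)] by auto
  qed
  show ?case unfolding chi.simps HH_def using at A E by simp
qed



lemma zip_PC:
  fixes MX :: "('a, 'i) lstr" and MY :: "('b, 'i) lstr"
  assumes sx: "is_struct I ar MX" and fI: "finite I" and len: "length as = length bs"
    and asX: "set as \<subseteq> univ MX" and bsY: "set bs \<subseteq> univ MY"
    and ag: "\<forall>j<length bs. \<nu> j = bs ! j" and sa: "sat MY \<nu> (atoms I ar MX as)"
  shows "set (zip as bs) \<in> PC I MX MY"
proof -
  have at: "\<forall>\<phi>\<in>atomset I ar MX as. sat MY \<nu> \<phi>"
    using sa unfolding atoms_def sat_BigConj list_of_eq[OF finite_atomset[OF fI]] .
  have mem: "(x, y) \<in> set (zip as bs) \<longleftrightarrow> (\<exists>j<length as. x = as ! j \<and> y = bs ! j)" for x y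
    using len by (auto simp: set_zip)
  have A: "\<forall>x y x' y'. (x, y) \<in> set (zip as bs) \<longrightarrow> (x', y') \<in> set (zip as bs) \<longrightarrow> (x = x') = (y = y')"
  proof (intro allI impI)
    fix x y x' y' assume "(x, y) \<in> set (zip as bs)" "(x', y') \<in> set (zip as bs)"
    then obtain j l where jl: "j < length as" "l < length as" "x = as ! j" "y = bs ! j" "x' = as ! l" "y' = bs ! l"
      using mem by blast
    show "(x = x') = (y = y')"
    proof (cases "as ! j = as ! l")
      case True
      then have "Eq j l \<in> atomset I ar MX as" using jl unfolding atomset_def by blast
      then have "\<nu> j = \<nu> l" using at by fastforce
      then show ?thesis using jl True ag len by auto
    next
      case False
      then have "Neg (Eq j l) \<in> atomset I ar MX as" using jl unfolding atomset_def by blast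
      then have "\<nu> j \<noteq> \<nu> l" using at by fastforce
      then show ?thesis using jl False ag len by auto
    qed
  qed
  have B: "Domain (set (zip as bs)) \<subseteq> univ MX" "Range (set (zip as bs)) \<subseteq> univ MY"
    using asX bsY by (auto dest: set_zip_leftD set_zip_rightD)
  have C: "\<forall>i\<in>I. \<forall>xs ys. list_all2 (\<lambda>x y. (x, y) \<in> set (zip as bs)) xs ys \<longrightarrow> xs \<in> rels MX i \<longrightarrow> ys \<in> rels MY i"
  proof (intro ballI allI impI)
    fix i xs ys assume i: "i \<in> I" and l2: "list_all2 (\<lambda>x y. (x, y) \<in> set (zip as bs)) xs ys" and xs: "xs \<in> rels MX i"
    have lx: "length xs = ar i" using sx i xs unfolding is_struct_def by blast
    have ly: "length ys = length xs" using l2 by (simp add: list_all2_lengthD)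
    have "\<forall>p\<in>{..<length xs}. \<exists>j. j < length as \<and> xs ! p = as ! j \<and> ys ! p = bs ! j"
      using l2 mem unfolding list_all2_conv_all_nth by blast
    then obtain J where J: "\<forall>p\<in>{..<length xs}. J p < length as \<and> xs ! p = as ! J p \<and> ys ! p = bs ! J p"
      by (metis (no_types, lifting) bchoice)
    define vs where "vs = map J [0..<length xs]"
    have m1: "map ((!) as) vs = xs" unfolding vs_def by (rule nth_equalityI) (use J in auto)
    have m2: "map ((!) bs) vs = ys" unfolding vs_def by (rule nth_equalityI) (use J ly in auto)
    have sv: "set vs \<subseteq> {..<length as}" unfolding vs_def using J by auto
    have "Rel i vs \<in> atomset I ar MX as"
      unfolding atomset_def using i lx sv m1 xs by (auto simp: vs_def)
    then have "map \<nu> vs \<in> rels MY i" using at by fastforce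
    moreover have "map \<nu> vs = map ((!) bs) vs" using sv ag len by (auto intro!: map_cong)
    ultimately show "ys \<in> rels MY i" using m2 by simp
  qed
  show ?thesis unfolding PC_def using A B C by blast
qed

lemma sat_chi_atoms: "sat M' \<nu> (chi I ar M r as) \<Longrightarrow> sat M' \<nu> (atoms I ar M as)"
  by (cases r) (auto simp: HH_def atoms_def)



lemma lll_cond:
  fixes MX :: "('a, 'i) lstr" and MY :: "('b, 'i) lstr"
  assumes fI: "finite I" and sx: "is_struct I ar MX" and sy: "is_struct I ar MY"
    and L: "lll (Pfm I ar) MX MY"
  shows "cond_fin I MX MY"
proof -
  define \<Pi> :: "nat \<Rightarrow> ('a \<times> 'b) set set" where "\<Pi> r = {set (zip as bs) | as bs. length as = length bs \<and>
     set as \<subseteq> univ MX \<and> set bs \<subseteq> univ MY \<and>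
     (\<exists>\<nu>. (\<forall>j<length bs. \<nu> j = bs ! j) \<and> sat MY \<nu> (chi I ar MX r as))}" for r
  obtain y0 where y0: "y0 \<in> univ MY" using sy unfolding is_struct_def by blast
  have ne: "{} \<in> \<Pi> r" for r
  proof -
    have "models MX (chi I ar MX r [])" unfolding models_def
      using sat_chi_self[OF fI, of "[]" MX] by simp
    moreover have "sentence (chi I ar MX r [])" unfolding sentence_def using fv_chi[of I ar MX r "[]"] by simp
    ultimately have "models MY (chi I ar MX r [])" using L chi_Pfm unfolding lll_def by blast
    then have "sat MY (\<lambda>_. y0) (chi I ar MX r [])" unfolding models_def using y0 by auto
    then show ?thesis unfolding \<Pi>_def by (intro CollectI exI[of _ "[]"]) auto
  qed
  have sub: "\<Pi> r \<subseteq> PC I MX MY" for r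
  proof
    fix f assume "f \<in> \<Pi> r"
    then obtain as bs \<nu> where f: "f = set (zip as bs)" "length as = length bs" "set as \<subseteq> univ MX" "set bs \<subseteq> univ MY"
      "\<forall>j<length bs. \<nu> j = bs ! j" "sat MY \<nu> (chi I ar MX r as)" unfolding \<Pi>_def by blast
    show "f \<in> PC I MX MY" unfolding f(1) using zip_PC[OF sx fI f(2-5) sat_chi_atoms[OF f(6)]] .
  qed
  have F1: "\<forall>r. \<forall>f\<in>\<Pi> (Suc r). \<forall>x\<in>univ MX. \<exists>g\<in>\<Pi> r. x \<in> Domain g \<and> f \<subseteq> g"
  proof (intro allI ballI)
    fix r f x assume fP: "f \<in> \<Pi> (Suc r)" and x: "x \<in> univ MX"
    then obtain as bs \<nu> where f: "f = set (zip as bs)" "length as = length bs" "set as \<subseteq> univ MX" "set bs \<subseteq> univ MY"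
      "\<forall>j<length bs. \<nu> j = bs ! j" "sat MY \<nu> (chi I ar MX (Suc r) as)" unfolding \<Pi>_def by blast
    let ?k = "length as"
    let ?U = "(\<lambda>c. chi I ar MX r (as @ [c])) ` univ MX"
    have Ueq: "set (list_of ?U) = ?U" by (rule list_of_eq[OF fin_CH[OF fI f(3)]])
    have "\<forall>\<psi>\<in>set (map (Ex ?k) (list_of ?U)). sat MY \<nu> \<psi>"
      using f(6) by (simp add: HH_def sat_BigConj del: sat.simps(7))
    moreover have "Ex ?k (chi I ar MX r (as @ [x])) \<in> set (map (Ex ?k) (list_of ?U))" using Ueq x by auto
    ultimately have "sat MY \<nu> (Ex ?k (chi I ar MX r (as @ [x])))" by blast
    then obtain d where d: "d \<in> univ MY" "sat MY (\<nu>(?k := d)) (chi I ar MX r (as @ [x]))" by auto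
    let ?g = "set (zip (as @ [x]) (bs @ [d]))"
    have "\<forall>j<length (bs @ [d]). (\<nu>(?k := d)) j = (bs @ [d]) ! j"
      using f(2,5) by (auto simp: nth_append less_Suc_eq)
    then have "?g \<in> \<Pi> r" unfolding \<Pi>_def
      by (intro CollectI exI[of _ "as @ [x]"] exI[of _ "bs @ [d]"] conjI exI[of _ "\<nu>(?k := d)"])
         (use f(2-4) x d in auto)
    moreover have "x \<in> Domain ?g" using f(2) by auto
    moreover have "f \<subseteq> ?g" using f(1,2) by auto
    ultimately show "\<exists>g\<in>\<Pi> r. x \<in> Domain g \<and> f \<subseteq> g" by blast
  qed
  have F2: "\<forall>r. \<forall>f\<in>\<Pi> (Suc r). \<forall>y\<in>univ MY. \<exists>g\<in>\<Pi> r. y \<in> Range g \<and> f \<subseteq> g"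
  proof (intro allI ballI)
    fix r f y assume fP: "f \<in> \<Pi> (Suc r)" and y: "y \<in> univ MY"
    then obtain as bs \<nu> where f: "f = set (zip as bs)" "length as = length bs" "set as \<subseteq> univ MX" "set bs \<subseteq> univ MY"
      "\<forall>j<length bs. \<nu> j = bs ! j" "sat MY \<nu> (chi I ar MX (Suc r) as)" unfolding \<Pi>_def by blast
    let ?k = "length as"
    let ?U = "(\<lambda>c. chi I ar MX r (as @ [c])) ` univ MX"
    have Ueq: "set (list_of ?U) = ?U" by (rule list_of_eq[OF fin_CH[OF fI f(3)]])
    have "sat MY \<nu> (All ?k (BigDisj (list_of ?U)))"
      using f(6) by (simp add: HH_def del: sat.simps(6))
    then have "sat MY (\<nu>(?k := y)) (BigDisj (list_of ?U))" using y by simp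
    then obtain c where c: "c \<in> univ MX" "sat MY (\<nu>(?k := y)) (chi I ar MX r (as @ [c]))"
      unfolding sat_BigDisj Ueq by blast
    let ?g = "set (zip (as @ [c]) (bs @ [y]))"
    have "\<forall>j<length (bs @ [y]). (\<nu>(?k := y)) j = (bs @ [y]) ! j"
      using f(2,5) by (auto simp: nth_append less_Suc_eq)
    then have "?g \<in> \<Pi> r" unfolding \<Pi>_def
      by (intro CollectI exI[of _ "as @ [c]"] exI[of _ "bs @ [y]"] conjI exI[of _ "\<nu>(?k := y)"])
         (use f(2-4) y c in auto)
    moreover have "y \<in> Range ?g" using f(2) by auto
    moreover have "f \<subseteq> ?g" using f(1,2) by auto
    ultimately show "\<exists>g\<in>\<Pi> r. y \<in> Range g \<and> f \<subseteq> g" by blast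
  qed
  show ?thesis unfolding cond_fin_def using ne sub F1 F2 by blast
qed



lemma games_lll:
  fixes MX :: "('a, 'i) lstr" and MY :: "('b, 'i) lstr"
  assumes sx: "is_struct I ar MX" and G: "\<forall>n. II_wins I n MX MY"
  shows "lll (Pfm I ar) MX MY"
  unfolding lll_def
proof (intro ballI impI)
  fix \<phi> assume P: "\<phi> \<in> Pfm I ar" and sen: "sentence \<phi>" and mx: "models MX \<phi>"
  obtain x0 where x0: "x0 \<in> univ MX" using sx unfolding is_struct_def by blast
  have sx0: "sat MX (\<lambda>_. x0) \<phi>" using mx x0 unfolding models_def by auto
  from G obtain \<sigma> where
   s1: "\<forall>h x. x \<in> univ MX \<longrightarrow> (\<exists>y\<in>univ MY. \<sigma> h (Inl x) = Inr y)" and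
   s2: "\<forall>h y. y \<in> univ MY \<longrightarrow> (\<exists>x\<in>univ MX. \<sigma> h (Inr y) = Inl x)" and
   s3: "\<forall>ms. length ms = qr \<phi> \<longrightarrow> set ms \<subseteq> Inl ` univ MX \<union> Inr ` univ MY \<longrightarrow> set (map fst (play \<sigma> ms)) \<in> PC I MX MY"
    unfolding II_wins_def by blast
  show "models MY \<phi>" unfolding models_def
  proof (intro allI impI)
    fix \<nu>' :: "nat \<Rightarrow> 'b"
    show "sat MY \<nu>' \<phi>"
      by (rule game_transfer[OF sx s1 s2 s3 P, of "[]" "\<lambda>_. x0"]) (use sen sx0 in \<open>auto simp: sentence_def\<close>)
  qed
qed

lemma coincide: "\<forall>v\<in>fv \<phi>. \<nu> v = \<nu>' v \<Longrightarrow> sat M \<nu> \<phi> = sat M \<nu>' \<phi>"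
proof (induction \<phi> arbitrary: \<nu> \<nu>')
  case (Rel i vs)
  then have mm: "map \<nu> vs = map \<nu>' vs" by (auto intro!: map_cong)
  show ?case using mm by (simp only: sat.simps)
next
  case (Neg \<phi>)
  have "sat M \<nu> \<phi> = sat M \<nu>' \<phi>" by (rule Neg.IH) (use Neg.prems in auto)
  then show ?case by simp
next
  case (Conj \<phi>1 \<phi>2)
  have "sat M \<nu> \<phi>1 = sat M \<nu>' \<phi>1" by (rule Conj.IH(1)) (use Conj.prems in auto)
  moreover have "sat M \<nu> \<phi>2 = sat M \<nu>' \<phi>2" by (rule Conj.IH(2)) (use Conj.prems in auto)
  ultimately show ?case by simp
next
  case (Disj \<phi>1 \<phi>2)
  have "sat M \<nu> \<phi>1 = sat M \<nu>' \<phi>1" by (rule Disj.IH(1)) (use Disj.prems in auto)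
  moreover have "sat M \<nu> \<phi>2 = sat M \<nu>' \<phi>2" by (rule Disj.IH(2)) (use Disj.prems in auto)
  ultimately show ?case by simp
next
  case (All v \<phi>)
  have "sat M (\<nu>(v := a)) \<phi> = sat M (\<nu>'(v := a)) \<phi>" for a by (rule All.IH) (use All.prems in auto)
  then show ?case by simp
next
  case (Ex v \<phi>)
  have "sat M (\<nu>(v := a)) \<phi> = sat M (\<nu>'(v := a)) \<phi>" for a by (rule Ex.IH) (use Ex.prems in auto)
  then show ?case by simp
qed auto

lemma models_sentence:
  assumes "sentence \<phi>" "univ M \<noteq> {}"
  shows "models M \<phi> \<longleftrightarrow> sat M \<nu> \<phi>"
proof -
  obtain a where a: "a \<in> univ M" using assms(2) by blast
  have eq: "sat M \<mu> \<phi> = sat M \<nu> \<phi>" for \<mu> by (rule coincide) (use assms(1) in \<open>simp add: sentence_def\<close>)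
  show ?thesis unfolding models_def
  proof
    assume "\<forall>\<mu>. (\<forall>v. \<mu> v \<in> univ M) \<longrightarrow> sat M \<mu> \<phi>"
    then have "sat M (\<lambda>_. a) \<phi>" using a by auto
    then show "sat M \<nu> \<phi>" using eq by blast
  next
    assume "sat M \<nu> \<phi>"
    then show "\<forall>\<mu>. (\<forall>v. \<mu> v \<in> univ M) \<longrightarrow> sat M \<mu> \<phi>" using eq by blast
  qed
qed

fun dual :: "'i fm \<Rightarrow> 'i fm" where
  "dual (Eq a b) = Neg (Eq a b)"
| "dual (Rel i vs) = Neg (Rel i vs)"
| "dual (Neg \<phi>) = \<phi>"
| "dual (Conj \<phi> \<psi>) = Disj (dual \<phi>) (dual \<psi>)"
| "dual (Disj \<phi> \<psi>) = Conj (dual \<phi>) (dual \<psi>)"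
| "dual (All v \<phi>) = Ex v (dual \<phi>)"
| "dual (Ex v \<phi>) = All v (dual \<phi>)"

lemma sat_dual: "sat M \<nu> (dual \<phi>) \<longleftrightarrow> \<not> sat M \<nu> \<phi>"
  by (induction \<phi> arbitrary: \<nu>) auto

lemma fv_dual: "fv (dual \<phi>) = fv \<phi>"
  by (induction \<phi>) auto

lemma dual_P: "\<phi> \<in> Pfm I ar \<Longrightarrow> dual \<phi> \<in> Nfm I ar"
  by (induction rule: Pfm.induct) (auto intro: Nfm.intros)

lemma dual_N: "\<phi> \<in> Nfm I ar \<Longrightarrow> dual \<phi> \<in> Pfm I ar"
  by (induction rule: Nfm.induct) (auto intro: Pfm.intros)

lemma models_dual: "sentence \<phi> \<Longrightarrow> univ M \<noteq> {} \<Longrightarrow> models M (dual \<phi>) \<longleftrightarrow> \<not> models M \<phi>"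
proof -
  assume s: "sentence \<phi>" and n: "univ M \<noteq> {}"
  have s': "sentence (dual \<phi>)" using s by (simp add: sentence_def fv_dual)
  show ?thesis using models_sentence[OF s n, of "\<lambda>_. undefined"] models_sentence[OF s' n, of "\<lambda>_. undefined"]
    by (simp add: sat_dual)
qed

lemma lll_PN:
  fixes MX :: "('a, 'i) lstr" and MY :: "('b, 'i) lstr"
  assumes nx: "univ MX \<noteq> {}" and ny: "univ MY \<noteq> {}"
  shows "lll (Pfm I ar) MX MY \<longleftrightarrow> lll (Nfm I ar) MY MX"
proof
  assume L: "lll (Pfm I ar) MX MY"
  show "lll (Nfm I ar) MY MX" unfolding lll_def
  proof (intro ballI impI)
    fix \<phi> assume N: "\<phi> \<in> Nfm I ar" and s: "sentence \<phi>" and my: "models MY \<phi>"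
    show "models MX \<phi>"
    proof (rule ccontr)
      assume "\<not> models MX \<phi>"
      then have "models MX (dual \<phi>)" using models_dual[OF s nx] by simp
      moreover have "sentence (dual \<phi>)" using s by (simp add: sentence_def fv_dual)
      ultimately have "models MY (dual \<phi>)" using L dual_N[OF N] unfolding lll_def by blast
      then show False using models_dual[OF s ny] my by simp
    qed
  qed
next
  assume L: "lll (Nfm I ar) MY MX"
  show "lll (Pfm I ar) MX MY" unfolding lll_def
  proof (intro ballI impI)
    fix \<phi> assume P: "\<phi> \<in> Pfm I ar" and s: "sentence \<phi>" and mx: "models MX \<phi>"
    show "models MY \<phi>"
    proof (rule ccontr)
      assume "\<not> models MY \<phi>"
      then have "models MY (dual \<phi>)" using models_dual[OF s ny] by simp
      moreover have "sentence (dual \<phi>)" using s by (simp add: sentence_def fv_dual)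
      ultimately have "models MX (dual \<phi>)" using L dual_P[OF P] unfolding lll_def by blast
      then show False using models_dual[OF s nx] mx by simp
    qed
  qed
qed

lemma partI:
  fixes MX :: "('a, 'i) lstr" and MY :: "('b, 'i) lstr"
  assumes fI: "finite I" and sx: "is_struct I ar MX" and sy: "is_struct I ar MY"
  shows "(cond_fin I MX MY \<longleftrightarrow> (\<forall>n. II_wins I n MX MY)) \<and>
         (cond_fin I MX MY \<longleftrightarrow> lll (Pfm I ar) MX MY) \<and>
         (cond_fin I MX MY \<longleftrightarrow> lll (Nfm I ar) MY MX)"
proof -
  have a: "cond_fin I MX MY \<Longrightarrow> \<forall>n. II_wins I n MX MY" using cond_games[OF sx sy] by blast
  have b: "\<forall>n. II_wins I n MX MY \<Longrightarrow> lll (Pfm I ar) MX MY" using games_lll[OF sx] by blast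
  have c: "lll (Pfm I ar) MX MY \<Longrightarrow> cond_fin I MX MY" using lll_cond[OF fI sx sy] by blast
  have d: "lll (Pfm I ar) MX MY \<longleftrightarrow> lll (Nfm I ar) MY MX"
    by (rule lll_PN) (use sx sy in \<open>auto simp: is_struct_def\<close>)
  show ?thesis using a b c d by blast
qed

theorem theorem5p1:
  fixes I :: "'i set" and ar :: "'i \<Rightarrow> nat"
    and MX :: "('a, 'i) lstr" and MY :: "('b, 'i) lstr"
  assumes "finite I"
    and "is_struct I ar MX" and "is_struct I ar MY"
  shows "(cond_fin I MX MY \<longleftrightarrow> (\<forall>n. II_wins I n MX MY)) \<and>
         (cond_fin I MX MY \<longleftrightarrow> lll (Pfm I ar) MX MY) \<and>
         (cond_fin I MX MY \<longleftrightarrow> lll (Nfm I ar) MY MX) \<and>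
         ((cond_fin I MX MY \<and> cond_fin I MY MX) \<longleftrightarrow>
            (\<forall>n. II_wins I n MX MY \<and> II_wins I n MY MX)) \<and>
         ((cond_fin I MX MY \<and> cond_fin I MY MX) \<longleftrightarrow> equivF (Pfm I ar) MX MY) \<and>
         ((cond_fin I MX MY \<and> cond_fin I MY MX) \<longleftrightarrow> equivF (Nfm I ar) MX MY) \<and>
         ((cond_fin I MX MY \<and> cond_fin I MY MX) \<longleftrightarrow> equivF (Pfm I ar \<union> Nfm I ar) MX MY) \<and>
         ((cond_fin I MX MY \<and> cond_fin I MY MX) \<longleftrightarrow> lll (Pfm I ar \<union> Nfm I ar) MX MY)"
proof -
  note I1 = partI[OF assms(1) assms(2) assms(3)]
  note I2 = partI[OF assms(1) assms(3) assms(2)]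
  have eP: "equivF (Pfm I ar) MX MY \<longleftrightarrow> lll (Pfm I ar) MX MY \<and> lll (Pfm I ar) MY MX"
    unfolding equivF_def lll_def by blast
  have eN: "equivF (Nfm I ar) MX MY \<longleftrightarrow> lll (Nfm I ar) MX MY \<and> lll (Nfm I ar) MY MX"
    unfolding equivF_def lll_def by blast
  have eU: "equivF (Pfm I ar \<union> Nfm I ar) MX MY \<longleftrightarrow> equivF (Pfm I ar) MX MY \<and> equivF (Nfm I ar) MX MY"
    unfolding equivF_def by blast
  have lU: "lll (Pfm I ar \<union> Nfm I ar) MX MY \<longleftrightarrow> lll (Pfm I ar) MX MY \<and> lll (Nfm I ar) MX MY"
    unfolding lll_def by blast
  show ?thesis using I1 I2 eP eN eU lU by blast
qed

end
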